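(* Let $n$ be an even positive integer, $p$ a prime dividing $n$, and $p^a$ the largest power of $p$ dividing $n$. Suppose there is a prime $q$ with $n/3<q<n/2$ and $n-2q<p^a$. Then: (a) if $p=2$, for every $1\le k\le n-1$ the coefficient $\binom{n}{k}$ is divisible by $2$ or $q$; (b) if $p\ne2$, then $\binom{n}{k}$ is divisible by $p$ or $q$ for all $1\le k\le n-1$ if and only if $\binom{n}{n/2}$ is divisible by $p$. *)

theory Defs
  imports Complex_Main "HOL-Computational_Algebra.Primes"
begin

end

theory Submission
  imports Defs
begin

lemma mult_small:
  fixes q i :: nat
  assumes "prime q" "0 < i" "i < q * q"
  shows "multiplicity q i = (if q dvd i then 1 else 0)"
proof (cases "q dvd i")
  case True
  then obtain t where t: "i = q * t" by blast
  have "t < q" using t assms by (metis mult_less_cancel1 zero_less_mult_pos)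
  have "t > 0" using t assms by auto
  have "\<not> q dvd t" using \<open>t < q\<close> \<open>t > 0\<close> by (simp add: nat_dvd_not_less)
  have "q \<noteq> 0" using assms(1) by auto
  then have "multiplicity q i = Suc (multiplicity q t)" unfolding t
    using \<open>t > 0\<close> assms(1) by (intro multiplicity_times_same) auto
  then show ?thesis using True \<open>\<not> q dvd t\<close> by (simp add: not_dvd_imp_multiplicity_0)
next
  case False
  then show ?thesis by (simp add: not_dvd_imp_multiplicity_0)
qed

lemma mult_fact:
  fixes q N :: nat
  assumes "prime q" "N < q * q"
  shows "multiplicity q (fact N :: nat) = N div q"
  using assms(2)
proof (induction N)
  case 0
  then show ?case by simp
next
  case (Suc N)
  have "multiplicity q (fact (Suc N) :: nat) = multiplicity q (Suc N) + multiplicity q (fact N :: nat)"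
  proof -
    have "(fact (Suc N) :: nat) = Suc N * fact N" by simp
    then show ?thesis using assms(1)
      by (metis prime_elem_multiplicity_mult_distrib prime_imp_prime_elem fact_nonzero nat.distinct(1))
  qed
  also have "\<dots> = (if q dvd Suc N then 1 else 0) + N div q"
    using Suc mult_small[OF assms(1), of "Suc N"] by simp
  also have "\<dots> = Suc N div q"
    using assms(1) by (auto simp: div_Suc prime_gt_1_nat dvd_eq_mod_eq_0)
  finally show ?case .
qed

lemma mult_choose:
  fixes q n k :: nat
  assumes "prime q" "n < q * q" "k \<le> n"
  shows "multiplicity q (n choose k) = n div q - k div q - (n - k) div q"
proof -
  have e: "fact k * fact (n - k) * (n choose k) = (fact n :: nat)"
    using binomial_fact_lemma[OF assms(3)] by simp
  have nz: "(n choose k) \<noteq> 0" using assms(3) by simp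
  have "multiplicity q (fact n :: nat) = multiplicity q (fact k :: nat) + multiplicity q (fact (n-k) :: nat) + multiplicity q (n choose k)"
    unfolding e[symmetric] using assms(1) nz
    by (simp add: prime_elem_multiplicity_mult_distrib)
  then show ?thesis using mult_fact[OF assms(1)] assms by simp
qed

lemma q_dvd_choose:
  fixes q n k :: nat
  assumes "prime q" "n < q * q" "k \<le> n"
  shows "q dvd (n choose k) \<longleftrightarrow> k div q + (n - k) div q < n div q"
proof -
  have nz: "(n choose k) \<noteq> 0" using assms(3) by simp
  have "q dvd (n choose k) \<longleftrightarrow> multiplicity q (n choose k) > 0"
    using prime_multiplicity_gt_zero_iff[of q "n choose k"] assms(1) nz by simp
  then show ?thesis using mult_choose[OF assms] by simp
qed

lemma p_dvd_choose:
  fixes p n k a :: nat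
  assumes "prime p" "p ^ a dvd n" "0 < k" "\<not> p ^ a dvd k"
  shows "p dvd (n choose k)"
proof (rule ccontr)
  assume h: "\<not> p dvd (n choose k)"
  have "k * (n choose k) = n * ((n - 1) choose (k - 1))"
    using times_binomial_minus1_eq[OF assms(3)] .
  hence "p ^ a dvd k * (n choose k)" using assms(2) by (metis dvd_mult2)
  moreover have "coprime (p ^ a) (n choose k)"
    using h assms(1) by (simp add: prime_imp_coprime coprime_power_left_iff)
  ultimately have "p ^ a dvd k" using coprime_dvd_mult_left_iff by blast
  with assms(4) show False by simp
qed

theorem mainTheorem10:
  fixes n p q :: nat
  assumes "n > 0" and "even n"
    and "prime p" and "p dvd n"
    and "prime q"
    and "real n / 3 < real q" and "real q < real n / 2"
    and "n - 2 * q < p ^ multiplicity p n"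
  shows "(p = 2 \<longrightarrow> (\<forall>k. 1 \<le> k \<and> k \<le> n - 1 \<longrightarrow> 2 dvd (n choose k) \<or> q dvd (n choose k)))
       \<and> (p \<noteq> 2 \<longrightarrow>
            ((\<forall>k. 1 \<le> k \<and> k \<le> n - 1 \<longrightarrow> p dvd (n choose k) \<or> q dvd (n choose k))
             \<longleftrightarrow> p dvd (n choose (n div 2))))"
proof -
  define a where "a = multiplicity p n"
  define r where "r = n - 2 * q"
  have n3: "n < 3 * q" using assms(6) by linarith
  have n2: "2 * q < n" using assms(7) by linarith
  have q2: "q \<noteq> 2" using n3 n2 assms(2) by auto
  have q3: "q \<ge> 3" using q2 prime_ge_2_nat[OF assms(5)] by linarith
  have nqq: "n < q * q" proof -
    have "3 * q \<le> q * q" using q3 by (rule mult_le_mono1)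
    then show ?thesis using n3 by linarith
  qed
  have pa: "p ^ a dvd n" unfolding a_def by (rule multiplicity_dvd)
  have rpa: "r < p ^ a" using assms(8) unfolding r_def a_def .
  have nr: "n = 2 * q + r" using n2 unfolding r_def by simp
  have rq: "r < q" using n3 nr by simp
  have outer: "p dvd (n choose k) \<or> q dvd (n choose k)"
    if k: "1 \<le> k" "k \<le> n - 1" "k < q \<or> q + r < k" for k
  proof -
    consider "k \<le> r" | "r < k \<and> k < q" | "q + r < k \<and> k < 2 * q" | "2 * q \<le> k"
      using k by linarith
    then show ?thesis
    proof cases
      case 1
      have "\<not> p ^ a dvd k" 
      proof
        assume "p ^ a dvd k"
        then have "p ^ a \<le> k" using k by (intro dvd_imp_le) auto
        then show False using 1 rpa by linarith
      qed
      then show ?thesis using p_dvd_choose[OF assms(3) pa, of k] k by simp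
    next
      case 2
      have "k div q = 0" using 2 by simp
      moreover have "(n - k) div q = 1" using 2 nr by (intro div_nat_eqI) auto
      moreover have "n div q = 2" using nr rq by (intro div_nat_eqI) auto
      ultimately show ?thesis using q_dvd_choose[OF assms(5) nqq, of k] k by simp
    next
      case 3
      have "k div q = 1" using 3 by (intro div_nat_eqI) auto
      moreover have "(n - k) div q = 0" using 3 nr by (intro div_less) linarith
      moreover have "n div q = 2" using nr rq by (intro div_nat_eqI) auto
      ultimately show ?thesis using q_dvd_choose[OF assms(5) nqq, of k] k by simp
    next
      case 4
      have "\<not> p ^ a dvd (n - k)" 
      proof
        assume "p ^ a dvd (n - k)"
        then have "p ^ a \<le> n - k" using k by (intro dvd_imp_le) auto
        then show False using 4 rpa nr by linarith
      qed
      then have "p dvd (n choose (n - k))" using p_dvd_choose[OF assms(3) pa, of "n - k"] k by simp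
      then show ?thesis using k by (simp add: binomial_symmetric[symmetric])
    qed
  qed
  have mid: "p dvd (n choose k)"
    if k: "q \<le> k" "k \<le> q + r" "k \<noteq> n div 2" for k
  proof (cases "p ^ a dvd k")
    case False
    then show ?thesis using p_dvd_choose[OF assms(3) pa, of k] k prime_gt_0_nat[OF assms(5)] by simp
  next
    case True
    have d: "int (p ^ a) dvd 2 * int k - int n" using True pa
    proof -
      have "int (p ^ a) dvd int k" "int (p ^ a) dvd int n" using True pa int_dvd_int_iff by blast+
      then show ?thesis by (intro dvd_diff dvd_mult)
    qed
    have b: "\<bar>2 * int k - int n\<bar> \<le> int r" using k nr by linarith
    have nz: "2 * int k - int n \<noteq> 0"
    proof
      assume "2 * int k - int n = 0"
      then have "n = 2 * k" by linarith
      then show False using k(3) by simp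
    qed
    have "int (p ^ a) \<le> \<bar>2 * int k - int n\<bar>" 
    proof -
      have "\<bar>int (p ^ a)\<bar> \<le> \<bar>2 * int k - int n\<bar>" using dvd_imp_le_int[OF nz d] .
      then show ?thesis by simp
    qed
    then show ?thesis using b rpa by linarith
  qed
  have nd2: "n div 2 = q + r div 2" "n - n div 2 = q + r div 2" using nr assms(2) by presburger+
  have rd: "r div 2 < q" using rq by linarith
  have half: "n div 2 div q = 1" "(n - n div 2) div q = 1"
  proof -
    have "(q + r div 2) div q = 1" using rd by (intro div_nat_eqI) auto
    then show "n div 2 div q = 1" "(n - n div 2) div q = 1" using nd2 by simp_all
  qed
  have ndq: "n div q = 2" using nr rq by (intro div_nat_eqI) auto
  have qhalf: "\<not> q dvd (n choose (n div 2))"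
    using q_dvd_choose[OF assms(5) nqq, of "n div 2"] half ndq by simp
  have A: "p = 2 \<longrightarrow> (\<forall>k. 1 \<le> k \<and> k \<le> n - 1 \<longrightarrow> 2 dvd (n choose k) \<or> q dvd (n choose k))"
  proof (intro impI allI)
    fix k assume p2: "p = 2" and k: "1 \<le> k \<and> k \<le> n - 1"
    show "2 dvd (n choose k) \<or> q dvd (n choose k)"
    proof (cases "k < q \<or> q + r < k")
      case True
      have "p dvd (n choose k) \<or> q dvd (n choose k)" using outer[of k] k True by blast
      then show ?thesis using p2 by simp
    next
      case False
      show ?thesis
      proof (cases "p ^ a dvd k")
        case nd: False
        then show ?thesis using p_dvd_choose[OF assms(3) pa, of k] k p2 by simp
      next
        case True
        define m where "m = n div p ^ a"
        have m: "n = p ^ a * m" "\<not> p dvd m"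
          using pa apply (simp add: m_def)
          unfolding m_def a_def using multiplicity_decompose[of n p] assms(1) assms(3) not_prime_unit by blast
        obtain t where t: "k = p ^ a * t" using True by blast
        have e: "2 * int k - int n = int (p ^ a) * (2 * int t - int m)" using t m by (simp add: algebra_simps)
        have "2 * int t - int m \<noteq> 0"
        proof
          assume "2 * int t - int m = 0"
          then have "m = 2 * t" by linarith
          then show False using m(2) p2 by simp
        qed
        then have "\<bar>2 * int t - int m\<bar> \<ge> 1" by linarith
        then have "int (p ^ a) * 1 \<le> int (p ^ a) * \<bar>2 * int t - int m\<bar>"
          by (intro mult_left_mono) auto
        then have "int (p ^ a) \<le> \<bar>2 * int k - int n\<bar>" unfolding e abs_mult by simp
        moreover have "\<bar>2 * int k - int n\<bar> \<le> int r" using False k nr by linarith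
        ultimately show ?thesis using rpa by linarith
      qed
    qed
  qed
  have B: "p \<noteq> 2 \<longrightarrow>
            ((\<forall>k. 1 \<le> k \<and> k \<le> n - 1 \<longrightarrow> p dvd (n choose k) \<or> q dvd (n choose k))
             \<longleftrightarrow> p dvd (n choose (n div 2)))"
  proof (intro impI iffI allI)
    assume "\<forall>k. 1 \<le> k \<and> k \<le> n - 1 \<longrightarrow> p dvd (n choose k) \<or> q dvd (n choose k)"
    then have "p dvd (n choose (n div 2)) \<or> q dvd (n choose (n div 2))"
    proof -
      have "1 \<le> n div 2 \<and> n div 2 \<le> n - 1" using nd2 nr q3 by linarith
      then show ?thesis using \<open>\<forall>k. _\<close> by blast
    qed
    then show "p dvd (n choose (n div 2))" using qhalf by blast
  next
    fix k
    assume p2: "p \<noteq> 2" and h: "p dvd (n choose (n div 2))" and k: "1 \<le> k \<and> k \<le> n - 1"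
    show "p dvd (n choose k) \<or> q dvd (n choose k)"
    proof (cases "k < q \<or> q + r < k")
      case True
      then show ?thesis using outer[of k] k by blast
    next
      case False
      show ?thesis
      proof (cases "k = n div 2")
        case True
        then show ?thesis using h by simp
      next
        case F2: False
        have "q \<le> k" "k \<le> q + r" using False by linarith+
        then show ?thesis using mid[of k] F2 by blast
      qed
    qed
  qed
  show ?thesis using conjI[OF A B] by this
qed

end
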